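(* In the basic model with an odd number $n$ of agents: - the leader election problem and the nontrivial move problem can each be solved in $O(\log N)$ rounds; - the location discovery problem can be solved in $n+O(\log N)$ rounds.
   Context: Model (basic): $n>4$ agents are at distinct, arbitrary initial positions on a circle of circumference $1$ and act in synchronised unit-time rounds. Each agent has its own notion of right (clockwise) and left; these need not be consistent across agents. At the start of each round every agent chooses a direction in $\{\text{right},\text{left}\}$ and moves at unit speed. Agents never pass: colliding agents instantly reverse direction. There is no communication. At the end of a round each agent learns only the clockwise distance, in its own orientation, from its start to its end position. Agents have distinct IDs in $\{1,\dots,N\}$, $N\ge n$ known, and know the parity of $n$. Rotation index: if $n_C$ agents start clockwise and $n_A$ anticlockwise (objective orientation), each agent moves to the initial position of the agent $(n_C-n_A)\bmod n$ places clockwise. A nontrivial move is a round with rotation index not in $\{0,n/2\}$. Problems: - Nontrivial move problem: assign each agent a direction so that the round in which all start in these directions is a nontrivial move. - Leader election: exactly one agent is "leader". - Location discovery: each agent determines the initial positions of all other agents relative to its own initial position. *)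

theory Defs
  imports Complex_Main
begin

(* Circle of circumference 1: points are reals in [0,1), measured clockwise
   (objective orientation) from a fixed origin. *)

definition cwdist :: "real \<Rightarrow> real \<Rightarrow> real" where
  "cwdist a b = frac (b - a)"

(* clockwise distance from a to b in the orientation of an agent whose
   chirality is c (c = True: the agent's "right" is the objective clockwise) *)
definition owndist :: "bool \<Rightarrow> real \<Rightarrow> real \<Rightarrow> real" where
  "owndist c a b = (if c then cwdist a b else cwdist b a)"

(* rotation index of a round with n agents, cw i = agent i starts objectively clockwise *)
definition rot_index :: "nat \<Rightarrow> (nat \<Rightarrow> bool) \<Rightarrow> nat" where
  "rot_index n cw =
     nat ((int (card {i. i < n \<and> cw i}) - int (card {i. i < n \<and> \<not> cw i})) mod int n)"

definition nontrivial_index :: "nat \<Rightarrow> nat \<Rightarrow> bool" where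
  "nontrivial_index n r \<longleftrightarrow> r \<noteq> 0 \<and> 2 * r \<noteq> n"

definition valid_config :: "nat \<Rightarrow> nat \<Rightarrow> (nat \<Rightarrow> real) \<Rightarrow> (nat \<Rightarrow> nat) \<Rightarrow> bool" where
  "valid_config N n q idf \<longleftrightarrow>
     n > 4 \<and> n \<le> N \<and>
     (\<forall>i<n. 0 \<le> q i \<and> q i < 1) \<and>
     (\<forall>i j. i < j \<and> j < n \<longrightarrow> q i < q j) \<and>
     inj_on idf {..<n} \<and> (\<forall>i<n. idf i \<in> {1..N})"

(* Execution. mv id hist = direction chosen (True = own right) by the agent with ID id
   after observation history hist. Returns, after t rounds, the slot (index of the
   initial position) currently occupied by each agent, and each agent's history of
   observations. *)
primrec run :: "nat \<Rightarrow> (nat \<Rightarrow> real) \<Rightarrow> (nat \<Rightarrow> bool) \<Rightarrow> (nat \<Rightarrow> nat)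
     \<Rightarrow> (nat \<Rightarrow> real list \<Rightarrow> bool) \<Rightarrow> nat \<Rightarrow> (nat \<Rightarrow> nat) \<times> (nat \<Rightarrow> real list)" where
  "run n q c idf mv 0 = ((\<lambda>i. i), (\<lambda>i. []))"
| "run n q c idf mv (Suc t) =
     (let s = fst (run n q c idf mv t);
          h = snd (run n q c idf mv t);
          r = rot_index n (\<lambda>i. mv (idf i) (h i) = c i);
          s' = (\<lambda>i. (s i + r) mod n)
      in (s', (\<lambda>i. h i @ [owndist (c i) (q (s i)) (q (s' i))])))"

definition hist :: "nat \<Rightarrow> (nat \<Rightarrow> real) \<Rightarrow> (nat \<Rightarrow> bool) \<Rightarrow> (nat \<Rightarrow> nat)
     \<Rightarrow> (nat \<Rightarrow> real list \<Rightarrow> bool) \<Rightarrow> nat \<Rightarrow> nat \<Rightarrow> real list" where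
  "hist n q c idf mv t i = snd (run n q c idf mv t) i"

definition decides ::
  "nat \<Rightarrow> (nat \<Rightarrow> real) \<Rightarrow> (nat \<Rightarrow> bool) \<Rightarrow> (nat \<Rightarrow> nat)
   \<Rightarrow> (nat \<Rightarrow> real list \<Rightarrow> bool) \<Rightarrow> (nat \<Rightarrow> real list \<Rightarrow> 'o option)
   \<Rightarrow> nat \<Rightarrow> nat \<Rightarrow> 'o \<Rightarrow> bool" where
  "decides n q c idf mv out T i v \<longleftrightarrow>
     (\<exists>t\<le>T. out (idf i) (hist n q c idf mv t i) = Some v \<and>
        (\<forall>t'<t. out (idf i) (hist n q c idf mv t' i) = None))"

definition solves_odd ::
  "(nat \<Rightarrow> nat \<Rightarrow> real list \<Rightarrow> bool) \<Rightarrow> (nat \<Rightarrow> nat \<Rightarrow> real list \<Rightarrow> 'o option)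
   \<Rightarrow> (nat \<Rightarrow> (nat \<Rightarrow> real) \<Rightarrow> (nat \<Rightarrow> bool) \<Rightarrow> (nat \<Rightarrow> 'o) \<Rightarrow> bool)
   \<Rightarrow> (nat \<Rightarrow> nat \<Rightarrow> nat) \<Rightarrow> bool" where
  "solves_odd mv out spec bound \<longleftrightarrow>
     (\<forall>N n q c idf. valid_config N n q idf \<and> odd n \<longrightarrow>
        (\<exists>dec. (\<forall>i<n. decides n q c idf (mv N) (out N) (bound N n) i (dec i))
               \<and> spec n q c dec))"

definition leader_spec :: "nat \<Rightarrow> (nat \<Rightarrow> real) \<Rightarrow> (nat \<Rightarrow> bool) \<Rightarrow> (nat \<Rightarrow> bool) \<Rightarrow> bool" where
  "leader_spec n q c dec \<longleftrightarrow> card {i. i < n \<and> dec i} = 1"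

(* dec i = direction (True = own right) assigned to agent i *)
definition nontrivial_move_spec :: "nat \<Rightarrow> (nat \<Rightarrow> real) \<Rightarrow> (nat \<Rightarrow> bool) \<Rightarrow> (nat \<Rightarrow> bool) \<Rightarrow> bool" where
  "nontrivial_move_spec n q c dec \<longleftrightarrow> nontrivial_index n (rot_index n (\<lambda>i. dec i = c i))"

definition location_spec :: "nat \<Rightarrow> (nat \<Rightarrow> real) \<Rightarrow> (nat \<Rightarrow> bool) \<Rightarrow> (nat \<Rightarrow> real set) \<Rightarrow> bool" where
  "location_spec n q c dec \<longleftrightarrow>
     (\<forall>i<n. dec i = {owndist (c i) (q i) (q j) | j. j < n \<and> j \<noteq> i})"

end

theory Submission
  imports Defs
begin


lemma run_Suc_fst: "fst (run n q c idf mv (Suc t)) i =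
   (fst (run n q c idf mv t) i + rot_index n (\<lambda>j. mv (idf j) (snd (run n q c idf mv t) j) = c j)) mod n"
  by (simp add: Let_def)

lemma run_Suc_snd: "snd (run n q c idf mv (Suc t)) i =
   snd (run n q c idf mv t) i @ [owndist (c i) (q (fst (run n q c idf mv t) i))
      (q ((fst (run n q c idf mv t) i + rot_index n (\<lambda>j. mv (idf j) (snd (run n q c idf mv t) j) = c j)) mod n))]"
  by (simp add: Let_def)

lemma run_len: "length (snd (run n q c idf mv t) i) = t"
  by (induction t) (auto simp: Let_def)

lemma run_prefix: "t \<le> t' \<Longrightarrow> take t (snd (run n q c idf mv t') i) = snd (run n q c idf mv t) i"
proof (induction t' )
  case 0 then show ?case by simp
next
  case (Suc t')
  show ?case
  proof (cases "t = Suc t'")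
    case True then show ?thesis using run_len by (metis take_all order_refl)
  next
    case False
    then have "t \<le> t'" using Suc by simp
    then show ?thesis using Suc.IH run_len[of n q c idf mv t' i]
      by (simp add: Let_def)
  qed
qed

lemma run_nth: "k < t \<Longrightarrow> snd (run n q c idf mv t) i ! k =
   owndist (c i) (q (fst (run n q c idf mv k) i))
      (q ((fst (run n q c idf mv k) i + rot_index n (\<lambda>j. mv (idf j) (snd (run n q c idf mv k) j) = c j)) mod n))"
proof -
  assume k: "k < t"
  have "snd (run n q c idf mv t) i ! k = take (Suc k) (snd (run n q c idf mv t) i) ! k"
    by simp
  also have "\<dots> = snd (run n q c idf mv (Suc k)) i ! k" using k run_prefix[of "Suc k" t] by simp
  also have "\<dots> = owndist (c i) (q (fst (run n q c idf mv k) i))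
      (q ((fst (run n q c idf mv k) i + rot_index n (\<lambda>j. mv (idf j) (snd (run n q c idf mv k) j) = c j)) mod n))"
    using run_len[of n q c idf mv k i] by (simp add: Let_def nth_append)
  finally show ?thesis .
qed

definition eps :: "nat \<Rightarrow> (nat \<Rightarrow> bool) \<Rightarrow> int" where
  "eps n P = (\<Sum>i<n. if P i then 1 else -1)"

lemma card_diff_eps: "int (card {i. i < n \<and> P i}) - int (card {i. i < n \<and> \<not> P i}) = eps n P"
proof (induction n)
  case 0 then show ?case by (simp add: eps_def)
next
  case (Suc n)
  have A: "{i. i < Suc n \<and> P i} = (if P n then insert n {i. i < n \<and> P i} else {i. i < n \<and> P i})"
    by (auto simp: less_Suc_eq)
  have B: "{i. i < Suc n \<and> \<not> P i} = (if P n then {i. i < n \<and> \<not> P i} else insert n {i. i < n \<and> \<not> P i})"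
    by (auto simp: less_Suc_eq)
  show ?case using Suc by (auto simp: A B eps_def)
qed

lemma rot_index_eps: "rot_index n P = nat (eps n P mod int n)"
  unfolding rot_index_def card_diff_eps ..

lemma eps_neg: "eps n (\<lambda>i. \<not> P i) = - eps n P"
  by (simp add: eps_def sum_negf[symmetric] if_distrib cong: if_cong) (rule sum.cong, auto)

lemma rot_index_lt: "n > 0 \<Longrightarrow> rot_index n P < n"
  unfolding rot_index_eps by (simp add: nat_less_iff)

lemma rot_index_int: "n > 0 \<Longrightarrow> int (rot_index n P) = eps n P mod int n"
  unfolding rot_index_eps by simp


locale cfg =
  fixes N n :: nat and q :: "nat \<Rightarrow> real" and c :: "nat \<Rightarrow> bool" and idf :: "nat \<Rightarrow> nat"
  assumes vc: "valid_config N n q idf" and oddn: "odd n"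
begin

lemma n_gt4: "n > 4" and nN: "n \<le> N" and q01: "\<And>i. i < n \<Longrightarrow> 0 \<le> q i \<and> q i < 1"
  and qmono: "\<And>i j. i < j \<Longrightarrow> j < n \<Longrightarrow> q i < q j"
  and idinj: "inj_on idf {..<n}" and idrange: "\<And>i. i < n \<Longrightarrow> idf i \<in> {1..N}"
  using vc unfolding valid_config_def by auto

lemma npos: "n > 0" using n_gt4 by simp

definition W :: "nat \<Rightarrow> nat \<Rightarrow> real" where
  "W i r = cwdist (q i) (q ((i + r) mod n))"

lemma W_explicit:
  assumes "i < n" "r < n"
  shows "W i r = (if i + r < n then q (i + r) - q i else 1 + q (i + r - n) - q i)"
proof (cases "i + r < n")
  case True
  have "q i \<le> q (i + r)" using qmono[of i "i+r"] True by (cases "r = 0") auto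
  moreover have "q (i + r) - q i < 1" using q01[of i] q01[of "i+r"] True assms by auto
  moreover have "(i + r) mod n = i + r" using True by simp
  ultimately have "W i r = q (i + r) - q i" unfolding W_def cwdist_def by (simp add: frac_eq)
  then show ?thesis using True by simp
next
  case False
  have m: "(i + r) mod n = i + r - n" using False assms by (simp add: mod_if)
  have lt: "i + r - n < i" using False assms by simp
  have "q (i + r - n) < q i" using qmono[OF lt] assms by simp
  moreover have "q (i + r - n) - q i > -1" using q01[of i] q01[of "i+r-n"] assms lt by auto
  ultimately have "frac (q (i + r - n) - q i) = 1 + q (i + r - n) - q i"
    by (subst frac_unique_iff) auto
  then show ?thesis using False by (simp add: W_def cwdist_def m)
qed

lemma W_0: "i < n \<Longrightarrow> W i 0 = 0"
  by (simp add: W_def cwdist_def)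

lemma W_bounds: "0 \<le> W i r" "W i r < 1"
  by (auto simp: W_def cwdist_def frac_lt_1)

lemma W_mono:
  assumes "i < n" "r1 < r2" "r2 < n"
  shows "W i r1 < W i r2"
proof -
  have r1: "r1 < n" using assms by simp
  show ?thesis
  proof (cases "i + r2 < n")
    case True
    then show ?thesis using W_explicit[OF assms(1) r1] W_explicit[OF assms(1) assms(3)] qmono[of "i+r1" "i+r2"] assms
      by auto
  next
    case False
    note F = False
    show ?thesis
    proof (cases "i + r1 < n")
      case True
      have "q (i + r1) < 1" using q01 True by auto
      moreover have "q (i + r2 - n) \<ge> 0" using q01 F assms by auto
      ultimately show ?thesis using W_explicit[OF assms(1) r1] W_explicit[OF assms(1) assms(3)] True F by auto
    next
      case False
      then show ?thesis using W_explicit[OF assms(1) r1] W_explicit[OF assms(1) assms(3)] F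
          qmono[of "i+r1-n" "i+r2-n"] assms by auto
    qed
  qed
qed

lemma W_pos: "i < n \<Longrightarrow> 0 < r \<Longrightarrow> r < n \<Longrightarrow> 0 < W i r"
  using W_mono[of i 0 r] W_0[of i] by simp

definition Ob :: "nat \<Rightarrow> nat \<Rightarrow> real" where
  "Ob i r = owndist (c i) (q i) (q ((i + r) mod n))"

definition rho :: "nat \<Rightarrow> nat \<Rightarrow> nat" where
  "rho i r = (if c i then r else (n - r) mod n)"

lemma O_false:
  assumes "i < n" "r < n" "\<not> c i"
  shows "Ob i r = (if r = 0 then 0 else 1 - W i r)"
proof (cases "r = 0")
  case True then show ?thesis using assms by (simp add: Ob_def owndist_def cwdist_def)
next
  case False
  have "W i r \<noteq> 0" using W_pos[of i r] False assms by simp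
  then have "q ((i + r) mod n) - q i \<notin> \<int>" by (simp add: W_def cwdist_def)
  moreover have "frac (q i - q ((i + r) mod n)) = frac (- (q ((i + r) mod n) - q i))" by simp
  ultimately have "frac (q i - q ((i + r) mod n)) = 1 - W i r"
    unfolding W_def cwdist_def by (simp only: frac_neg if_False)
  then show ?thesis using assms False
    by (simp add: Ob_def owndist_def cwdist_def)
qed

lemma O_true: "c i \<Longrightarrow> Ob i r = W i r"
  by (simp add: Ob_def owndist_def W_def)

lemma O_mono:
  assumes "i < n" "r1 < n" "r2 < n"
  shows "Ob i r1 < Ob i r2 \<longleftrightarrow> rho i r1 < rho i r2"
proof (cases "c i")
  case True
  then show ?thesis using W_mono[OF assms(1)] assms
    by (simp add: O_true rho_def) (metis W_mono linorder_neqE_nat order_less_asym)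
next
  case False
  have Wl: "\<And>r. W i r < 1" by (rule W_bounds)
  have Wp: "\<And>r. 0 < r \<Longrightarrow> r < n \<Longrightarrow> 0 < W i r" using W_pos assms(1) by simp
  show ?thesis
  proof (cases "r1 = 0")
    case True
    then show ?thesis using False assms Wl[of r2] by (auto simp: O_false rho_def mod_if)
  next
    case r1: False
    show ?thesis
    proof (cases "r2 = 0")
      case True
      then show ?thesis using False assms Wl[of r1] r1 by (auto simp: O_false rho_def mod_if)
    next
      case r2: False
      have "Ob i r1 < Ob i r2 \<longleftrightarrow> W i r2 < W i r1" using False assms r1 r2 by (simp add: O_false)
      also have "\<dots> \<longleftrightarrow> r2 < r1"
        by (metis W_mono assms(1) assms(2) assms(3) linorder_neqE_nat order_less_asym)
      also have "\<dots> \<longleftrightarrow> rho i r1 < rho i r2" using False assms r1 r2 by (auto simp: rho_def mod_if)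
      finally show ?thesis .
    qed
  qed
qed

lemma rho_inj: "r1 < n \<Longrightarrow> r2 < n \<Longrightarrow> rho i r1 = rho i r2 \<Longrightarrow> r1 = r2"
  by (auto simp: rho_def mod_if split: if_splits)

lemma O_inj:
  assumes "i < n" "r1 < n" "r2 < n"
  shows "Ob i r1 = Ob i r2 \<longleftrightarrow> r1 = r2"
  using O_mono[OF assms] O_mono[OF assms(1) assms(3) assms(2)] rho_inj[OF assms(2,3)]
  by (metis linorder_neqE_nat order_less_irrefl)

lemma O_zero:
  assumes "i < n" "r < n"
  shows "Ob i r = 0 \<longleftrightarrow> r = 0"
proof -
  have "Ob i 0 = 0" using assms by (simp add: Ob_def owndist_def cwdist_def)
  then show ?thesis using O_inj[OF assms(1) assms(2), of 0] npos by auto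
qed

end


context cfg begin

definition sg :: "nat \<Rightarrow> int" where "sg i = (if c i then 1 else -1)"
definition F :: "(nat \<Rightarrow> bool) \<Rightarrow> int" where "F S = (\<Sum>i<n. if S i then sg i else 0)"
definition s :: int where "s = (\<Sum>i<n. sg i)"

lemma F_all: "F (\<lambda>_. True) = s" by (simp add: F_def s_def)

lemma eps_flip: "eps n (\<lambda>i. (\<not> S i) = c i) = s - 2 * F S"
proof -
  have "eps n (\<lambda>i. (\<not> S i) = c i) = (\<Sum>i<n. sg i - 2 * (if S i then sg i else 0))"
    unfolding eps_def by (rule sum.cong) (auto simp: sg_def)
  also have "\<dots> = s - 2 * F S" by (simp add: sum_subtractf sum_distrib_left s_def F_def)
  finally show ?thesis .
qed

lemma rot_eq_iff: "rot_index n P = rot_index n P' \<longleftrightarrow> int n dvd (eps n P - eps n P')"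
proof -
  have "rot_index n P = rot_index n P' \<longleftrightarrow> int (rot_index n P) = int (rot_index n P')" by simp
  also have "\<dots> \<longleftrightarrow> eps n P mod int n = eps n P' mod int n" using rot_index_int npos by simp
  also have "\<dots> \<longleftrightarrow> int n dvd (eps n P - eps n P')" by (rule mod_eq_dvd_iff)
  finally show ?thesis .
qed

lemma coprime2: "coprime (int n) 2"
  using oddn by simp

lemma dvd2_iff: "int n dvd 2 * x \<longleftrightarrow> int n dvd x"
  using coprime2 by (simp add: coprime_dvd_mult_right_iff)

lemma rot_flip_eq_iff: "rot_index n (\<lambda>i. (\<not> S i) = c i) = rot_index n (\<lambda>i. (\<not> S' i) = c i)
     \<longleftrightarrow> int n dvd (F S - F S')"
proof -
  have "s - 2 * F S - (s - 2 * F S') = 2 * (F S' - F S)" by simp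
  then show ?thesis unfolding rot_eq_iff eps_flip
    by (metis dvd2_iff dvd_minus_iff minus_diff_eq)
qed

lemma all_one: assumes "\<forall>i<n. w i = 1 \<or> w i = (-1::int)" "(\<Sum>i<n. w i) = int n"
  shows "\<forall>i<n. w i = 1"
proof -
  have "(\<Sum>i<n. 1 - w i) = 0" using assms(2) by (simp add: sum_subtractf)
  moreover have "\<forall>i\<in>{..<n}. 0 \<le> 1 - w i"
  proof
    fix i assume "i \<in> {..<n}" then have "w i = 1 \<or> w i = -1" using assms(1) by simp
    then show "0 \<le> 1 - w i" by auto
  qed
  ultimately have "\<forall>i\<in>{..<n}. 1 - w i = 0" using sum_nonneg_eq_0_iff[of "{..<n}" "\<lambda>i. 1 - w i"] by simp
  then show ?thesis by simp
qed

lemma all_mone: assumes "\<forall>i<n. w i = 1 \<or> w i = (-1::int)" "(\<Sum>i<n. w i) = - int n"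
  shows "\<forall>i<n. w i = -1"
proof -
  have "\<forall>i<n. - w i = 1 \<or> - w i = -1" using assms(1) by auto
  moreover have "(\<Sum>i<n. - w i) = int n" using assms(2) by (simp add: sum_negf)
  ultimately have "\<forall>i<n. - w i = 1" by (rule all_one)
  then show ?thesis by auto
qed

lemma sum_pm_props: assumes "\<forall>i<m. w i = 1 \<or> w i = (-1::int)"
  shows "\<bar>\<Sum>i<m. w i\<bar> \<le> int m \<and> even ((\<Sum>i<m. w i) - int m)"
  using assms
proof (induction m)
  case 0 then show ?case by simp
next
  case (Suc m)
  then have IH: "\<bar>\<Sum>i<m. w i\<bar> \<le> int m" "even ((\<Sum>i<m. w i) - int m)" by auto
  have "w m = 1 \<or> w m = -1" using Suc.prems by simp
  moreover have "(\<Sum>i<Suc m. w i) - int (Suc m) = ((\<Sum>i<m. w i) - int m) + (w m - 1)" by simp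
  moreover have "\<bar>\<Sum>i<Suc m. w i\<bar> \<le> \<bar>\<Sum>i<m. w i\<bar> + \<bar>w m\<bar>"
    by (simp add: abs_triangle_ineq)
  ultimately show ?case using IH by (elim disjE) simp_all
qed

lemma pm_dvd: assumes "\<forall>i<n. w i = 1 \<or> w i = (-1::int)" "int n dvd (\<Sum>i<n. w i)"
  shows "(\<forall>i<n. w i = 1) \<or> (\<forall>i<n. w i = -1)"
proof -
  let ?x = "\<Sum>i<n. w i"
  obtain k where k: "?x = int n * k" using assms(2) by (auto elim: dvdE)
  have b: "\<bar>?x\<bar> \<le> int n" and p: "even (?x - int n)" using sum_pm_props[OF assms(1)] by auto
  have "odd ?x" using p oddn by simp
  then have "k \<noteq> 0" using k by auto
  moreover have "\<bar>k\<bar> \<le> 1"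
  proof (rule ccontr)
    assume "\<not> \<bar>k\<bar> \<le> 1"
    then have "\<bar>k\<bar> \<ge> 2" by simp
    then have "\<bar>?x\<bar> \<ge> int n * 2" using k npos by (simp add: abs_mult mult_left_mono)
    then show False using b npos by simp
  qed
  ultimately have "k = 1 \<or> k = -1" by auto
  then show ?thesis using k all_one[OF assms(1)] all_mone[OF assms(1)] by auto
qed

lemma sg_pm: "sg i = 1 \<or> sg i = -1" by (simp add: sg_def)

lemma s_dvd_same: assumes "int n dvd s" shows "\<forall>i<n. \<forall>j<n. c i = c j"
proof -
  have "(\<forall>i<n. sg i = 1) \<or> (\<forall>i<n. sg i = -1)"
    using pm_dvd[of sg] assms sg_pm by (simp add: s_def)
  then show ?thesis by (auto simp: sg_def split: if_splits)
qed

end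


definition nb :: "nat \<Rightarrow> nat" where "nb N = (LEAST b. N < 2 ^ b)"

lemma nb_gt: "N < 2 ^ nb N"
  unfolding nb_def by (rule LeastI[of _ N]) simp

lemma nb_le: "0 < nb N \<Longrightarrow> 2 ^ (nb N - 1) \<le> N"
proof -
  assume "0 < nb N"
  then have "nb N - 1 < nb N" by simp
  then have "\<not> N < 2 ^ (nb N - 1)" unfolding nb_def using not_less_Least by blast
  then show ?thesis by simp
qed

definition inU :: "nat \<Rightarrow> nat \<Rightarrow> bool" where
  "inU j x = (if j = 0 then True else odd (x div 2 ^ (j - 1)))"

primrec loF :: "nat \<Rightarrow> (nat \<Rightarrow> bool) \<Rightarrow> nat \<Rightarrow> nat" where
  "loF B t 0 = 0"
| "loF B t (Suc k) = (if t (B + 2 + k) then loF B t k else loF B t k + 2 ^ (B - Suc k))"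

definition jselF :: "(nat \<Rightarrow> bool) \<Rightarrow> nat" where
  "jselF t = (LEAST j. t (Suc j))"

definition leaderF :: "nat \<Rightarrow> (nat \<Rightarrow> bool) \<Rightarrow> nat" where
  "leaderF B t = loF B t B + 1"

lemma loF_cong: "(\<And>p. p < B + 2 + k \<Longrightarrow> t p = t' p) \<Longrightarrow> loF B t k = loF B t' k"
  by (induction k) auto

lemma jselF_cong: assumes "\<And>p. p \<le> Suc B \<Longrightarrow> t p = t' p" "\<exists>j\<le>B. t (Suc j)"
  shows "jselF t = jselF t'"
proof -
  obtain j where j: "j \<le> B" "t (Suc j)" using assms(2) by auto
  have eq: "\<And>j. j \<le> B \<Longrightarrow> t (Suc j) = t' (Suc j)" using assms(1) by simp
  let ?L = "LEAST j. t (Suc j)"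
  have L1: "t (Suc ?L)" using j(2) by (rule LeastI[of "\<lambda>j. t (Suc j)"])
  have L2: "?L \<le> j" using j by (intro Least_le) simp
  show ?thesis unfolding jselF_def
  proof (rule Least_equality[symmetric])
    show "t' (Suc ?L)" using L1 L2 j eq by simp
  next
    fix y assume y: "t' (Suc y)"
    show "?L \<le> y"
    proof (rule ccontr)
      assume "\<not> ?L \<le> y"
      then have "y < ?L" by simp
      moreover have "t (Suc y)" using y eq \<open>y < ?L\<close> L2 j by simp
      ultimately show False using not_less_Least by blast
    qed
  qed
qed

lemma bits_differ: "(a::nat) \<noteq> b \<Longrightarrow> a < 2 ^ B \<Longrightarrow> b < 2 ^ B \<Longrightarrow>
    \<exists>k<B. odd (a div 2 ^ k) \<noteq> odd (b div 2 ^ k)"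
proof (induction B arbitrary: a b)
  case 0 then show ?case by auto
next
  case (Suc B)
  show ?case
  proof (cases "odd a = odd b")
    case False then show ?thesis by (intro exI[of _ 0]) simp
  next
    case True
    have "a div 2 \<noteq> b div 2"
    proof
      assume "a div 2 = b div 2"
      moreover have "a mod 2 = b mod 2" using True by presburger
      ultimately have "2 * (a div 2) + a mod 2 = 2 * (b div 2) + b mod 2" by simp
      then show False using Suc.prems(1) by simp
    qed
    moreover have "a div 2 < 2 ^ B" "b div 2 < 2 ^ B" using Suc.prems by auto
    ultimately obtain k where "k < B" "odd (a div 2 div 2 ^ k) \<noteq> odd (b div 2 div 2 ^ k)"
      using Suc.IH by blast
    then show ?thesis by (intro exI[of _ "Suc k"]) (simp add: div_mult2_eq)
  qed
qed

context cfg begin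

abbreviation B where "B \<equiv> nb N"

definition FU :: "nat \<Rightarrow> int" where "FU j = F (\<lambda>i. inU j (idf i))"

lemma idlt: "i < n \<Longrightarrow> idf i < 2 ^ B"
  using idrange[of i] nb_gt[of N] by auto

lemma F_const: assumes "\<forall>i<n. c i = c 0"
  shows "F S = sg 0 * int (card {i. i < n \<and> S i})"
proof -
  have sgc: "\<And>i. i < n \<Longrightarrow> sg i = sg 0" using assms unfolding sg_def by metis
  have "F S = (\<Sum>i<n. if S i then sg 0 else 0)"
    unfolding F_def by (rule sum.cong) (metis lessThan_iff sgc)+
  also have "\<dots> = (\<Sum>i\<in>{i\<in>{..<n}. S i}. sg 0)"
    by (rule sum.inter_filter[symmetric]) simp
  also have "\<dots> = (\<Sum>i\<in>{i. i < n \<and> S i}. sg 0)"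
    by (rule sum.cong) auto
  also have "\<dots> = sg 0 * int (card {i. i < n \<and> S i})" by simp
  finally show ?thesis .
qed

lemma exists_sel: "\<exists>j\<le>B. \<not> int n dvd FU j"
proof (cases "int n dvd FU 0")
  case False then show ?thesis by auto
next
  case True
  then have "int n dvd s" by (simp add: FU_def inU_def F_all)
  then have same: "\<forall>i<n. c i = c 0" using s_dvd_same npos by blast
  have ne: "idf 0 \<noteq> idf 1" using idinj n_gt4 by (auto dest: inj_onD)
  obtain k where k: "k < B" "odd (idf 0 div 2 ^ k) \<noteq> odd (idf 1 div 2 ^ k)"
    using bits_differ[OF ne idlt[of 0] idlt[of 1]] n_gt4 by fastforce
  let ?S = "\<lambda>i. inU (Suc k) (idf i)"
  let ?C = "{i. i < n \<and> ?S i}"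
  have fin: "finite ?C" by simp
  have sub: "?C \<subseteq> {..<n}" by auto
  have x1: "?S 0 \<or> ?S 1" and x2: "\<not> (?S 0 \<and> ?S 1)" using k(2) by (simp_all add: inU_def)
  have n1: "0 < n" "1 < n" using n_gt4 by auto
  have "\<exists>i<n. \<not> ?S i" using x2 n1 by blast
  then have "?C \<noteq> {..<n}" by blast
  with sub have "?C \<subset> {..<n}" by blast
  then have lt: "card ?C < n" using psubset_card_mono[of "{..<n}" ?C] by simp
  have "\<exists>i<n. ?S i" using x1 n1 by blast
  then have "?C \<noteq> {}" by blast
  then have gt: "card ?C > 0" using fin by (simp add: card_gt_0_iff)
  have "FU (Suc k) = sg 0 * int (card ?C)" unfolding FU_def by (rule F_const[OF same])
  moreover have "\<not> int n dvd sg 0 * int (card ?C)"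
  proof
    assume "int n dvd sg 0 * int (card ?C)"
    then have "int n dvd int (card ?C)" by (cases "c 0") (auto simp: sg_def)
    then have "n dvd card ?C" by simp
    then show False using lt gt by (auto dest: dvd_imp_le)
  qed
  ultimately show ?thesis using k by (intro exI[of _ "Suc k"]) auto
qed

definition fS :: "nat \<Rightarrow> nat \<Rightarrow> int" where
  "fS j x = F (\<lambda>i. inU j (idf i) \<and> idf i \<le> x)"

lemma fS_0: "fS j 0 = 0"
proof -
  have h: "\<And>i. i < n \<Longrightarrow> idf i \<noteq> 0" using idrange by fastforce
  show ?thesis unfolding fS_def F_def by (intro sum.neutral ballI) (simp add: h)
qed

lemma fS_top: "fS j (2 ^ B) = FU j"
proof -
  have "\<And>i. i < n \<Longrightarrow> idf i \<le> 2 ^ B" using idlt by (simp add: less_imp_le)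
  then show ?thesis unfolding fS_def FU_def F_def by (intro sum.cong) auto
qed

lemma fS_step: assumes "fS j x \<noteq> fS j (Suc x)" shows "\<exists>i<n. idf i = Suc x"
proof (rule ccontr)
  assume "\<not> (\<exists>i<n. idf i = Suc x)"
  then have "\<And>i. i < n \<Longrightarrow> (idf i \<le> x) = (idf i \<le> Suc x)" by (auto simp: le_Suc_eq)
  then have "fS j x = fS j (Suc x)" unfolding fS_def F_def by (intro sum.cong) auto
  then show False using assms by simp
qed

lemma search_ok:
  assumes A1: "\<And>j. j \<le> B \<Longrightarrow> t (Suc j) \<longleftrightarrow> \<not> int n dvd FU j"
    and A2: "\<And>k. k < B \<Longrightarrow> t (B + 2 + k) \<longleftrightarrow> \<not> int n dvd fS (jselF t) (loF B t k + 2 ^ (B - Suc k))"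
  shows "\<exists>i<n. idf i = leaderF B t"
proof -
  obtain j0 where j0: "j0 \<le> B" "\<not> int n dvd FU j0" using exists_sel by auto
  then have tj0: "t (Suc j0)" using A1 by simp
  let ?j = "jselF t"
  have tj: "t (Suc ?j)" unfolding jselF_def using tj0 by (rule LeastI[of "\<lambda>j. t (Suc j)"])
  have jle: "?j \<le> B" unfolding jselF_def using j0(1) Least_le[of "\<lambda>j. t (Suc j)" j0] tj0 by simp
  have nd: "\<not> int n dvd FU ?j" using A1[OF jle] tj by simp
  have inv: "k \<le> B \<Longrightarrow> int n dvd fS ?j (loF B t k) \<and> \<not> int n dvd fS ?j (loF B t k + 2 ^ (B - k))" for k
  proof (induction k)
    case 0 then show ?case using nd by (simp add: fS_0 fS_top)
  next
    case (Suc k)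
    then have IH: "int n dvd fS ?j (loF B t k)" "\<not> int n dvd fS ?j (loF B t k + 2 ^ (B - k))" and kB: "k < B"
      by auto
    have p: "2 ^ (B - k) = 2 ^ (B - Suc k) + (2::nat) ^ (B - Suc k)"
      using kB by (metis Suc_diff_Suc mult_2 power_Suc)
    show ?case
    proof (cases "t (B + 2 + k)")
      case True
      then show ?thesis using A2[OF kB] IH by simp
    next
      case False
      then show ?thesis using A2[OF kB] IH p by (simp add: add.assoc)
    qed
  qed
  from inv[of B] have "fS ?j (loF B t B) \<noteq> fS ?j (Suc (loF B t B))" by auto
  then show ?thesis using fS_step by (simp add: leaderF_def)
qed

end


definition tstOf :: "real list \<Rightarrow> nat \<Rightarrow> bool" where
  "tstOf h k = (h ! (2 * k) \<noteq> h ! 0)"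

definition dirP :: "nat \<Rightarrow> nat \<Rightarrow> nat \<Rightarrow> (nat \<Rightarrow> bool) \<Rightarrow> bool \<Rightarrow> bool" where
  "dirP N x p t b =
    (if p = 0 then True
     else if p \<le> Suc (nb N) then \<not> inU (p - 1) x
     else if p \<le> 2 * nb N + 1 then
       \<not> (inU (jselF t) x \<and> x \<le> loF (nb N) t (p - nb N - 2) + 2 ^ (nb N - Suc (p - nb N - 2)))
     else if p = 2 * nb N + 2 then x \<noteq> leaderF (nb N) t
     else \<not> (x = leaderF (nb N) t \<and> b))"

definition Tw :: "nat \<Rightarrow> nat" where "Tw N = 4 * nb N + 8"

definition betaOf :: "nat \<Rightarrow> real list \<Rightarrow> bool" where
  "betaOf N h = (h ! (2 * (2 * nb N + 2)) < h ! 0)"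

definition zeroOf :: "nat \<Rightarrow> real list \<Rightarrow> bool" where
  "zeroOf N h = (h ! (2 * (2 * nb N + 2)) = 0)"

definition walkDir :: "nat \<Rightarrow> nat \<Rightarrow> real list \<Rightarrow> bool" where
  "walkDir N x h =
    (let L = leaderF (nb N) (tstOf h);
         tau = (if zeroOf N h then x = L else (betaOf N h = tstOf h (2 * nb N + 3)))
     in if x = L then True else \<not> tau)"

definition probe :: "nat \<Rightarrow> nat \<Rightarrow> real list \<Rightarrow> bool" where
  "probe N x h = dirP N x (length h div 2) (tstOf h) (betaOf N h)"

definition mvA :: "nat \<Rightarrow> nat \<Rightarrow> real list \<Rightarrow> bool" where
  "mvA N x h = (if length h < Tw N then (if even (length h) then probe N x h else \<not> probe N x (butlast h))
                else walkDir N x (take (Tw N) h))"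

lemma dirP_cong:
  assumes "\<And>k. k < p \<Longrightarrow> t k = t' k" "nb N + 2 \<le> p \<Longrightarrow> \<exists>j\<le>nb N. t (Suc j)"
  shows "dirP N x p t b = dirP N x p t' b"
proof -
  have lo: "\<And>k. nb N + 2 + k \<le> p \<Longrightarrow> loF (nb N) t k = loF (nb N) t' k"
    using assms(1) by (intro loF_cong) auto
  have js: "nb N + 2 \<le> p \<Longrightarrow> jselF t = jselF t'"
    using assms by (intro jselF_cong) auto
  have ld: "2 * nb N + 2 \<le> p \<Longrightarrow> leaderF (nb N) t = leaderF (nb N) t'"
    unfolding leaderF_def using lo[of "nb N"] by simp
  show ?thesis unfolding dirP_def using lo[of "p - nb N - 2"] js ld by auto
qed

declare run.simps(2)[simp del]

context cfg begin

abbreviation RS where "RS t \<equiv> fst (run n q c idf (mvA N) t)"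
abbreviation RH where "RH t \<equiv> snd (run n q c idf (mvA N) t)"
definition rr :: "nat \<Rightarrow> nat" where "rr t = rot_index n (\<lambda>j. mvA N (idf j) (RH t j) = c j)"

lemma rr_lt: "rr t < n" unfolding rr_def using rot_index_lt npos by simp

lemma RS_Suc: "RS (Suc t) i = (RS t i + rr t) mod n"
  unfolding rr_def by (rule run_Suc_fst)

lemma RH_nth: "k < t \<Longrightarrow> RH t i ! k = owndist (c i) (q (RS k i)) (q ((RS k i + rr k) mod n))"
  unfolding rr_def by (rule run_nth)

lemma RH_len: "length (RH t i) = t" by (rule run_len)

lemma RH_butlast: "butlast (RH (Suc t) i) = RH t i"
  by (simp add: Let_def run.simps(2))

lemma rr_odd: assumes "Suc (2 * p) < Tw N" shows "int (rr (Suc (2 * p))) = (- int (rr (2 * p))) mod int n"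
proof -
  have e: "\<And>j. mvA N (idf j) (RH (Suc (2 * p)) j) = (\<not> mvA N (idf j) (RH (2 * p) j))"
    using assms by (simp add: mvA_def RH_len RH_butlast del: run.simps)
  have fe: "(\<lambda>j. mvA N (idf j) (RH (Suc (2 * p)) j) = c j) = (\<lambda>j. \<not> (mvA N (idf j) (RH (2 * p) j) = c j))"
    using e by auto
  have "int (rr (Suc (2 * p))) = eps n (\<lambda>j. \<not> (mvA N (idf j) (RH (2 * p) j) = c j)) mod int n"
    unfolding rr_def rot_index_int[OF npos] fe ..
  also have "\<dots> = (- eps n (\<lambda>j. mvA N (idf j) (RH (2 * p) j) = c j)) mod int n"
    using eps_neg[of n "\<lambda>j. mvA N (idf j) (RH (2 * p) j) = c j"] by (simp only:)
  also have "\<dots> = (- int (rr (2 * p))) mod int n"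
    unfolding rr_def rot_index_int[OF npos] by (simp add: mod_minus_eq)
  finally show ?thesis .
qed

lemma home: "p \<le> 2 * B + 4 \<Longrightarrow> i < n \<Longrightarrow> RS (2 * p) i = i"
proof (induction p)
  case 0 then show ?case by simp
next
  case (Suc p)
  then have IH: "RS (2 * p) i = i" by simp
  have lt: "Suc (2 * p) < Tw N" using Suc.prems by (simp add: Tw_def)
  have "RS (Suc (Suc (2 * p))) i = ((RS (2 * p) i + rr (2 * p)) mod n + rr (Suc (2 * p))) mod n"
    by (simp only: RS_Suc)
  then have "RS (2 * Suc p) i = ((i + rr (2 * p)) mod n + rr (Suc (2 * p))) mod n"
    using IH by simp
  also have "\<dots> = (i + rr (2 * p) + rr (Suc (2 * p))) mod n" by (simp add: mod_add_left_eq)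
  also have "\<dots> = i"
  proof -
    have "int (i + rr (2 * p) + rr (Suc (2 * p))) mod int n = (int i + int (rr (2 * p)) + (- int (rr (2 * p))) mod int n) mod int n"
      using rr_odd[OF lt] by (simp only: of_nat_add)
    also have "\<dots> = (int i + int (rr (2 * p)) + (- int (rr (2 * p)))) mod int n" by (rule mod_add_right_eq)
    also have "\<dots> = int i mod int n" by simp
    finally have "int ((i + rr (2 * p) + rr (Suc (2 * p))) mod n) = int i"
      using Suc.prems by (simp only: zmod_int) simp
    then show ?thesis by simp
  qed
  finally show ?case .
qed

lemma obs_home: "k \<le> 2 * B + 4 \<Longrightarrow> 2 * k < t \<Longrightarrow> i < n \<Longrightarrow> RH t i ! (2 * k) = Ob i (rr (2 * k))"
  using RH_nth home by (simp add: Ob_def)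

definition G :: "nat \<Rightarrow> bool" where "G k = (rr (2 * k) \<noteq> rr 0)"

lemma tst_G: "k < p \<Longrightarrow> p \<le> 2 * B + 4 \<Longrightarrow> i < n \<Longrightarrow> tstOf (RH (2 * p) i) k = G k"
proof -
  assume a: "k < p" "p \<le> 2 * B + 4" "i < n"
  have "RH (2 * p) i ! (2 * k) = Ob i (rr (2 * k))" using a by (intro obs_home) auto
  moreover have "RH (2 * p) i ! (2 * 0) = Ob i (rr (2 * 0))" using a by (intro obs_home) auto
  ultimately show ?thesis unfolding tstOf_def G_def using O_inj[OF a(3) rr_lt rr_lt] by simp
qed

end


lemma rot_index_cong: "(\<And>j. j < n \<Longrightarrow> P j = P' j) \<Longrightarrow> rot_index n P = rot_index n P'"
proof -
  assume a: "\<And>j. j < n \<Longrightarrow> P j = P' j"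
  have "{i. i < n \<and> P i} = {i. i < n \<and> P' i}" "{i. i < n \<and> \<not> P i} = {i. i < n \<and> \<not> P' i}"
    using a by auto
  then show ?thesis unfolding rot_index_def by simp
qed

context cfg begin

lemma mv_probe: "p \<le> 2 * B + 3 \<Longrightarrow> mvA N x (RH (2 * p) j) = dirP N x p (tstOf (RH (2 * p) j)) (betaOf N (RH (2 * p) j))"
  by (simp add: mvA_def probe_def RH_len Tw_def)

lemma G_flip:
  assumes "\<And>j. j < n \<Longrightarrow> mvA N (idf j) (RH (2 * p) j) = (\<not> S j)"
  shows "G p \<longleftrightarrow> \<not> int n dvd F S"
proof -
  have r0: "rr 0 = rot_index n (\<lambda>j. (\<not> False) = c j)"
    unfolding rr_def by (rule rot_index_cong) (simp add: mv_probe[of 0, simplified] dirP_def)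
  have rp: "rr (2 * p) = rot_index n (\<lambda>j. (\<not> S j) = c j)"
    unfolding rr_def by (rule rot_index_cong) (simp add: assms)
  have F0: "F (\<lambda>j. False) = 0" by (simp add: F_def)
  show ?thesis unfolding G_def r0 rp using rot_flip_eq_iff[of S "\<lambda>j. False"] F0 by simp
qed

lemma dirG_early: assumes "p \<le> Suc B" "j < n" shows "dirP N x p (tstOf (RH (2 * p) j)) b = dirP N x p G b"
proof (rule dirP_cong)
  fix k assume "k < p" then show "tstOf (RH (2 * p) j) k = G k" using assms by (intro tst_G) auto
next
  assume "nb N + 2 \<le> p" then show "\<exists>j'\<le>nb N. tstOf (RH (2 * p) j) (Suc j')" using assms by simp
qed

lemma G_U: "j \<le> B \<Longrightarrow> G (Suc j) \<longleftrightarrow> \<not> int n dvd FU j"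
  unfolding FU_def
proof (rule G_flip)
  fix i assume "j \<le> B" "i < n"
  then show "mvA N (idf i) (RH (2 * Suc j) i) = (\<not> inU j (idf i))"
    using mv_probe[of "Suc j"] dirG_early[of "Suc j" i] by (simp add: dirP_def)
qed

lemma G_exists: "\<exists>j\<le>B. G (Suc j)"
  using exists_sel G_U by blast

lemma dirG: assumes "p \<le> 2 * B + 3" "j < n" shows "dirP N x p (tstOf (RH (2 * p) j)) b = dirP N x p G b"
proof (rule dirP_cong)
  show "\<And>k. k < p \<Longrightarrow> tstOf (RH (2 * p) j) k = G k" using assms by (intro tst_G) auto
  assume "nb N + 2 \<le> p"
  obtain j' where "j' \<le> B" "G (Suc j')" using G_exists by auto
  moreover have "tstOf (RH (2 * p) j) (Suc j') = G (Suc j')"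
    using assms \<open>nb N + 2 \<le> p\<close> \<open>j' \<le> B\<close> by (intro tst_G) auto
  ultimately show "\<exists>j'\<le>nb N. tstOf (RH (2 * p) j) (Suc j')" by auto
qed

lemma G_search: "k < B \<Longrightarrow> G (B + 2 + k) \<longleftrightarrow> \<not> int n dvd fS (jselF G) (loF B G k + 2 ^ (B - Suc k))"
  unfolding fS_def
proof (rule G_flip)
  fix i assume "k < B" "i < n"
  then show "mvA N (idf i) (RH (2 * (B + 2 + k)) i) =
      (\<not> (inU (jselF G) (idf i) \<and> idf i \<le> loF B G k + 2 ^ (B - Suc k)))"
    using mv_probe[of "B + 2 + k"] dirG[of "B + 2 + k" i] by (simp add: dirP_def)
qed

definition Ld where "Ld = leaderF B G"

lemma leader_exists: "\<exists>i<n. idf i = Ld"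
  unfolding Ld_def by (rule search_ok; (rule G_U G_search; assumption))

definition li where "li = (SOME i. i < n \<and> idf i = Ld)"

lemma li: "li < n" "idf li = Ld"
  using someI_ex[OF leader_exists[simplified Bex_def[symmetric]]] unfolding li_def by auto

lemma li_iff: "j < n \<Longrightarrow> idf j = Ld \<longleftrightarrow> j = li"
  using li idinj by (metis inj_onD lessThan_iff)

end


context cfg begin

definition rf where "rf = rr (2 * (2 * B + 2))"
definition beta where "beta j = (Ob j rf < Ob j (rr 0))"

lemma rr0: "rr 0 = rot_index n (\<lambda>j. (\<not> (\<lambda>j. False) j) = c j)"
  unfolding rr_def by (rule rot_index_cong) (simp add: mv_probe[of 0, simplified] dirP_def)

lemma rf_eq: "rf = rot_index n (\<lambda>j. (\<not> (j = li)) = c j)"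
  unfolding rf_def rr_def
proof (rule rot_index_cong)
  fix j assume j: "j < n"
  have "mvA N (idf j) (RH (2 * (2 * B + 2)) j) = dirP N (idf j) (2 * B + 2) G (betaOf N (RH (2 * (2 * B + 2)) j))"
    using mv_probe[of "2 * B + 2"] dirG[of "2 * B + 2" j] j by simp
  also have "\<dots> = (\<not> (j = li))" using li_iff[OF j] by (simp add: dirP_def Ld_def)
  finally show "(mvA N (idf j) (RH (2 * (2 * B + 2)) j) = c j) = ((\<not> j = li) = c j)" by simp
qed

lemma betaOf_RH: assumes "2 * B + 2 < p" "p \<le> 2 * B + 4" "j < n"
  shows "betaOf N (RH (2 * p) j) = beta j" "zeroOf N (RH (2 * p) j) = (rf = 0)"
proof -
  have a: "RH (2 * p) j ! (2 * (2 * B + 2)) = Ob j rf" unfolding rf_def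
    using assms by (intro obs_home) auto
  have b: "RH (2 * p) j ! (2 * 0) = Ob j (rr (2 * 0))"
    using assms by (intro obs_home) auto
  show "betaOf N (RH (2 * p) j) = beta j" using a b by (simp add: betaOf_def beta_def)
  show "zeroOf N (RH (2 * p) j) = (rf = 0)" using a O_zero[OF assms(3)] rr_lt by (simp add: zeroOf_def rf_def)
qed

lemma F_single: "F (\<lambda>j. j = li \<and> P j) = (if P li then sg li else 0)"
proof -
  have "F (\<lambda>j. j = li \<and> P j) = (\<Sum>j\<in>{..<n}. if j = li then (if P li then sg li else 0) else 0)"
    unfolding F_def by (rule sum.cong) auto
  also have "\<dots> = (if P li then sg li else 0)" using li(1) by (simp add: sum.delta)
  finally show ?thesis .
qed

lemma G_bcast: "G (2 * B + 3) \<longleftrightarrow> beta li"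
proof -
  have "G (2 * B + 3) \<longleftrightarrow> \<not> int n dvd F (\<lambda>j. j = li \<and> beta j)"
  proof (rule G_flip)
    fix j assume j: "j < n"
    have "mvA N (idf j) (RH (2 * (2 * B + 3)) j) = dirP N (idf j) (2 * B + 3) G (betaOf N (RH (2 * (2 * B + 3)) j))"
      using mv_probe[of "2 * B + 3"] dirG[of "2 * B + 3" j] j by simp
    also have "\<dots> = (\<not> (j = li \<and> beta j))" using li_iff[OF j] betaOf_RH[of "2 * B + 3" j] j
      by (simp add: dirP_def Ld_def)
    finally show "mvA N (idf j) (RH (2 * (2 * B + 3)) j) = (\<not> (j = li \<and> beta j))" .
  qed
  also have "\<dots> \<longleftrightarrow> beta li" unfolding F_single using n_gt4 by (auto simp: sg_def)
  finally show ?thesis .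
qed

definition y :: "nat \<Rightarrow> bool" where "y j = (j = li \<or> c j \<noteq> c li)"

lemma rho_same: "c j = c i \<Longrightarrow> rho j = rho i" by (auto simp: rho_def)

lemma rot_zero_iff: "rot_index n P = 0 \<longleftrightarrow> int n dvd eps n P"
proof -
  have "rot_index n P = 0 \<longleftrightarrow> int (rot_index n P) = 0" by simp
  also have "\<dots> \<longleftrightarrow> eps n P mod int n = 0" using rot_index_int[OF npos] by simp
  finally show ?thesis by (simp add: dvd_eq_mod_eq_0)
qed

lemma tau_correct:
  assumes j: "j < n" "j \<noteq> li"
  shows "(if rf = 0 then False else (beta j = beta li)) = (c j = c li)"
proof (cases "rf = 0")
  case True
  let ?w = "\<lambda>k. if k = li then - sg li else sg k"
  have "int n dvd eps n (\<lambda>k. (\<not> (k = li)) = c k)" using True rf_eq rot_zero_iff by simp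
  moreover have "eps n (\<lambda>k. (\<not> (k = li)) = c k) = (\<Sum>k<n. ?w k)"
    unfolding eps_def by (rule sum.cong) (auto simp: sg_def)
  ultimately have "int n dvd (\<Sum>k<n. ?w k)" by simp
  moreover have "\<forall>k<n. ?w k = 1 \<or> ?w k = -1" by (auto simp: sg_def)
  ultimately have "(\<forall>k<n. ?w k = 1) \<or> (\<forall>k<n. ?w k = -1)" by (rule pm_dvd[rotated])
  then have "?w j = ?w li"
  proof (elim disjE)
    assume h: "\<forall>k<n. ?w k = 1"
    show "?w j = ?w li" using h[rule_format, OF j(1)] h[rule_format, OF li(1)] by simp
  next
    assume h: "\<forall>k<n. ?w k = -1"
    show "?w j = ?w li" using h[rule_format, OF j(1)] h[rule_format, OF li(1)] by simp
  qed
  then have "sg j = - sg li" using j by simp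
  then show ?thesis using True by (auto simp: sg_def split: if_splits)
next
  case False
  show ?thesis
  proof (cases "c j = c li")
    case True
    then show ?thesis using False by (simp add: beta_def O_mono[OF j(1) rr_lt rr_lt] O_mono[OF li(1) rr_lt rr_lt] rho_same[OF True] rf_def)
  next
    case diff: False
    have r0: "rr 0 \<noteq> 0"
    proof
      assume "rr 0 = 0"
      then have "int n dvd eps n (\<lambda>j. (\<not> (\<lambda>j. False) j) = c j)" using rr0 rot_zero_iff by simp
      then have "int n dvd s" using eps_flip[of "\<lambda>j. False"] by (simp add: F_def)
      then show False using s_dvd_same diff j li(1) by blast
    qed
    have neq: "rf \<noteq> rr 0"
    proof
      assume "rf = rr 0"
      then have "rot_index n (\<lambda>k. (\<not> (k = li)) = c k) = rot_index n (\<lambda>k. (\<not> (\<lambda>j. False) k) = c k)"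
        using rf_eq rr0 by simp
      then have "int n dvd (F (\<lambda>k. k = li) - F (\<lambda>k. False))"
        by (subst rot_flip_eq_iff[symmetric]) simp
      moreover have "F (\<lambda>k. k = li) = sg li" using F_single[of "\<lambda>_. True"] by simp
      ultimately have "int n dvd sg li" by (simp add: F_def)
      then show False using n_gt4 by (cases "c li") (auto simp: sg_def)
    qed
    have rl: "rf < n" "rr 0 < n" using rr_lt rf_def by auto
    have flip: "\<And>r. r < n \<Longrightarrow> r \<noteq> 0 \<Longrightarrow> rho j r = n - rho li r \<and> 0 < rho li r \<and> rho li r < n"
      using diff by (auto simp: rho_def mod_if)
    have ne: "rho li rf \<noteq> rho li (rr 0)" using rho_inj[OF rl] neq by blast
    have "beta j = (rho j rf < rho j (rr 0))" unfolding beta_def rf_def using O_mono[OF j(1) rr_lt rr_lt] by simp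
    also have "\<dots> = (rho li (rr 0) < rho li rf)" using flip[OF rl(1) False] flip[OF rl(2) r0] by auto
    also have "\<dots> = (\<not> beta li)" unfolding beta_def rf_def using O_mono[OF li(1) rr_lt rr_lt] ne rf_def by auto
    finally show ?thesis using False diff by auto
  qed
qed

lemma walk_dir: assumes "j < n" shows "walkDir N (idf j) (RH (Tw N) j) = y j"
proof -
  have Tw: "Tw N = 2 * (2 * B + 4)" by (simp add: Tw_def)
  have t: "\<And>k. k < 2 * B + 4 \<Longrightarrow> tstOf (RH (Tw N) j) k = G k" unfolding Tw using assms by (intro tst_G) auto
  have L: "leaderF B (tstOf (RH (Tw N) j)) = Ld" unfolding Ld_def leaderF_def
    using t by (subst loF_cong[of B _ "tstOf (RH (Tw N) j)" G]) auto
  have bz: "betaOf N (RH (Tw N) j) = beta j" "zeroOf N (RH (Tw N) j) = (rf = 0)"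
    unfolding Tw using betaOf_RH[of "2 * B + 4" j] assms by auto
  have g: "tstOf (RH (Tw N) j) (2 * B + 3) = beta li" using t[of "2 * B + 3"] G_bcast by simp
  show ?thesis
  proof (cases "j = li")
    case True then show ?thesis using L li by (simp add: walkDir_def Let_def y_def)
  next
    case False
    have "idf j \<noteq> Ld" using li_iff[OF assms] False by simp
    then have "walkDir N (idf j) (RH (Tw N) j) = (\<not> (if rf = 0 then False else (beta j = beta li)))"
      using L bz g by (simp add: walkDir_def Let_def)
    then show ?thesis using tau_correct[OF assms False] False by (simp add: y_def)
  qed
qed

end


lemma sum_take_drop: assumes "T + m \<le> length h" shows "sum_list (take m (drop T h)) = (\<Sum>l<m. h ! (T + l))"
proof -
  have len: "length (take m (drop T h)) = m" using assms by simp
  have "sum_list (take m (drop T h)) = (\<Sum>l<m. take m (drop T h) ! l)"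
    by (simp only: sum_list_sum_nth len atLeast0LessThan)
  also have "\<dots> = (\<Sum>l<m. h ! (T + l))" using assms by (intro sum.cong) auto
  finally show ?thesis .
qed

lemma frac_sum_frac: "frac (\<Sum>l<(m::nat). frac (f l)) = frac (\<Sum>l<m. (f l :: real))"
proof (induction m)
  case 0 then show ?case by simp
next
  case (Suc m)
  have "frac (\<Sum>l<Suc m. frac (f l)) = frac ((\<Sum>l<m. frac (f l)) + f m)" by simp
  also have "\<dots> = frac (frac (\<Sum>l<m. frac (f l)) + f m)" by simp
  also have "\<dots> = frac (frac (\<Sum>l<m. f l) + f m)" using Suc by simp
  also have "\<dots> = frac (\<Sum>l<Suc m. f l)" by simp
  finally show ?case .
qed

definition dd :: "bool \<Rightarrow> real \<Rightarrow> real" where "dd b v = (if b then v else - v)"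

lemma owndist_dd: "owndist b x z = frac (dd b (z - x))"
  by (simp add: owndist_def cwdist_def dd_def)

lemma dd_diff: "dd b u - dd b v = dd b (u - v)" by (simp add: dd_def)

context cfg begin

definition R where "R = rot_index n (\<lambda>j. y j = c j)"
definition slot where "slot i m = (i + m * R) mod n"

lemma R_lt: "R < n" unfolding R_def using rot_index_lt npos by simp

lemma rr_walk: assumes "Tw N \<le> t" shows "rr t = R"
  unfolding rr_def R_def
proof (rule rot_index_cong)
  fix j assume j: "j < n"
  have "mvA N (idf j) (RH t j) = walkDir N (idf j) (take (Tw N) (RH t j))"
    using assms by (simp add: mvA_def RH_len)
  also have "\<dots> = walkDir N (idf j) (RH (Tw N) j)" using run_prefix[OF assms] by simp
  also have "\<dots> = y j" using walk_dir[OF j] .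
  finally show "(mvA N (idf j) (RH t j) = c j) = (y j = c j)" by simp
qed

lemma RS_walk: "i < n \<Longrightarrow> RS (Tw N + m) i = slot i m"
proof (induction m)
  case 0
  have "RS (2 * (2 * B + 4)) i = i" using 0 by (intro home) auto
  then show ?case using 0 by (simp add: Tw_def slot_def)
next
  case (Suc m)
  have "RS (Suc (Tw N + m)) i = (RS (Tw N + m) i + rr (Tw N + m)) mod n" by (rule RS_Suc)
  also have "\<dots> = ((i + m * R) mod n + R) mod n" using Suc rr_walk[of "Tw N + m"] by (simp add: slot_def)
  also have "\<dots> = (i + m * R + R) mod n" by (rule mod_add_left_eq)
  also have "\<dots> = slot i (Suc m)" unfolding slot_def by (simp add: algebra_simps)
  finally show ?case by simp
qed

lemma obs_walk: "i < n \<Longrightarrow> Tw N + l < t \<Longrightarrow>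
   RH t i ! (Tw N + l) = owndist (c i) (q (slot i l)) (q (slot i (Suc l)))"
proof -
  assume a: "i < n" "Tw N + l < t"
  have "RH t i ! (Tw N + l) = owndist (c i) (q (RS (Tw N + l) i)) (q ((RS (Tw N + l) i + rr (Tw N + l)) mod n))"
    by (rule RH_nth[OF a(2)])
  also have "\<dots> = owndist (c i) (q (slot i l)) (q ((slot i l + R) mod n))"
    using RS_walk[OF a(1)] rr_walk[of "Tw N + l"] by simp
  also have "(slot i l + R) mod n = slot i (Suc l)"
  proof -
    have "(slot i l + R) mod n = (i + l * R + R) mod n" unfolding slot_def by (rule mod_add_left_eq)
    also have "\<dots> = slot i (Suc l)" unfolding slot_def by (simp add: algebra_simps)
    finally show ?thesis .
  qed
  finally show ?thesis .
qed

lemma eps_y: "eps n (\<lambda>j. y j = c j) = 2 * sg li - int n * sg li"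
proof -
  have "eps n (\<lambda>j. y j = c j) = (\<Sum>j<n. - sg li + (if j = li then 2 * sg li else 0))"
    unfolding eps_def by (rule sum.cong) (auto simp: y_def sg_def)
  also have "\<dots> = - int n * sg li + 2 * sg li" using li(1) by (simp add: sum.distrib sum_subtractf sum.delta)
  finally show ?thesis by simp
qed

lemma coprime_R: "coprime R n"
proof -
  have "int R = (2 * sg li - int n * sg li) mod int n" unfolding R_def rot_index_int[OF npos] eps_y ..
  also have "\<dots> = (2 * sg li + (- sg li) * int n) mod int n" by (simp add: algebra_simps)
  also have "\<dots> = (2 * sg li) mod int n" by (rule mod_mult_self1)
  finally have e: "int R = (2 * sg li) mod int n" .
  have "coprime (2 * sg li) (int n)" using oddn by (cases "c li") (simp_all add: sg_def)
  then have "coprime ((2 * sg li) mod int n) (int n)" using npos by simp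
  then have "coprime (int R) (int n)" using e by simp
  then show ?thesis by simp
qed

lemma slot_eq_iff: assumes "i < n" shows "slot i m = i \<longleftrightarrow> n dvd m"
proof -
  have "slot i m = i \<longleftrightarrow> int ((i + m * R) mod n) = int i" by (simp add: slot_def)
  also have "\<dots> \<longleftrightarrow> (int i + int (m * R)) mod int n = int i mod int n"
    using assms by (simp add: zmod_int)
  also have "\<dots> \<longleftrightarrow> int n dvd (int i + int (m * R) - int i)" by (rule mod_eq_dvd_iff)
  also have "\<dots> \<longleftrightarrow> n dvd m * R" by (simp only: add_diff_cancel_left' of_nat_dvd_iff)
  also have "\<dots> \<longleftrightarrow> n dvd m" using coprime_R by (simp add: coprime_dvd_mult_left_iff coprime_commute)
  finally show ?thesis .
qed

end


definition outL :: "nat \<Rightarrow> nat \<Rightarrow> real list \<Rightarrow> bool option" where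
  "outL N x h = (if length h = 4 * nb N + 4 then Some (x = leaderF (nb N) (tstOf h)) else None)"

definition outM :: "nat \<Rightarrow> nat \<Rightarrow> real list \<Rightarrow> bool option" where
  "outM N x h = (if length h = Tw N then Some (walkDir N x h) else None)"

definition outD :: "nat \<Rightarrow> nat \<Rightarrow> real list \<Rightarrow> real set option" where
  "outD N x h = (if Tw N < length h \<and> frac (sum_list (drop (Tw N) h)) = 0
     then Some {frac (sum_list (take m (drop (Tw N) h))) | m. 0 < m \<and> m < length h - Tw N} else None)"

lemma decides_mono: "decides n q c idf mv out T i v \<Longrightarrow> T \<le> T' \<Longrightarrow> decides n q c idf mv out T' i v"
  unfolding decides_def by (meson order_trans)

context cfg begin

lemma ndvd_small: "0 < m \<Longrightarrow> m < n \<Longrightarrow> \<not> n dvd m" using nat_dvd_not_less by blast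

lemma slot_lt: "slot i m < n" unfolding slot_def using npos by simp

lemma slot_0: "i < n \<Longrightarrow> slot i 0 = i" by (simp add: slot_def)

lemma slot_shift: "slot (slot i a) d = slot i (a + d)"
proof -
  have "slot (slot i a) d = ((i + a * R) mod n + d * R) mod n" by (simp add: slot_def)
  also have "\<dots> = (i + a * R + d * R) mod n" by (rule mod_add_left_eq)
  also have "\<dots> = slot i (a + d)" unfolding slot_def by (simp add: algebra_simps)
  finally show ?thesis .
qed

lemma own_zero: assumes "i < n" "j < n" shows "owndist b (q i) (q j) = 0 \<longleftrightarrow> i = j"
proof
  assume h: "owndist b (q i) (q j) = 0"
  have "dd b (q j - q i) \<in> \<int>" using h by (simp add: owndist_dd)
  then have "q j - q i \<in> \<int>" by (cases b) (auto simp: dd_def dest: Ints_minus)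
  then obtain z where z: "q j - q i = of_int z" by (auto elim: Ints_cases)
  have "\<bar>q j - q i\<bar> < 1" using q01[OF assms(1)] q01[OF assms(2)] by auto
  then have "\<bar>real_of_int z\<bar> < 1" using z by simp
  then have "real_of_int \<bar>z\<bar> < 1" by (simp only: of_int_abs)
  then have "\<bar>z\<bar> < 1" by linarith
  then have "z = 0" by simp
  then have "q j = q i" using z by simp
  then show "i = j" using qmono assms by (metis linorder_neqE_nat order_less_irrefl)
qed (simp add: owndist_def cwdist_def)

lemma frac_walk: assumes "i < n" "m \<le> k"
  shows "frac (sum_list (take m (drop (Tw N) (RH (Tw N + k) i)))) = owndist (c i) (q i) (q (slot i m))"
proof -
  let ?p = "\<lambda>l. dd (c i) (q (slot i l))"
  have "sum_list (take m (drop (Tw N) (RH (Tw N + k) i))) = (\<Sum>l<m. RH (Tw N + k) i ! (Tw N + l))"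
    using assms by (intro sum_take_drop) (simp add: RH_len)
  also have "\<dots> = (\<Sum>l<m. frac (?p (Suc l) - ?p l))"
    using assms by (intro sum.cong) (auto simp: obs_walk owndist_dd dd_diff)
  finally have "frac (sum_list (take m (drop (Tw N) (RH (Tw N + k) i)))) = frac (\<Sum>l<m. ?p (Suc l) - ?p l)"
    using frac_sum_frac by simp
  also have "\<dots> = frac (?p m - ?p 0)" using sum_lessThan_telescope[of ?p m] by simp
  also have "\<dots> = owndist (c i) (q i) (q (slot i m))" using slot_0[OF assms(1)] by (simp add: owndist_dd dd_diff)
  finally show ?thesis .
qed

lemma slot_image: assumes "i < n" shows "{slot i m | m. 0 < m \<and> m < n} = {j. j < n \<and> j \<noteq> i}"
proof -
  have sub: "{slot i m | m. 0 < m \<and> m < n} \<subseteq> {j. j < n \<and> j \<noteq> i}"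
  proof
    fix x assume "x \<in> {slot i m | m. 0 < m \<and> m < n}"
    then obtain m where m: "x = slot i m" "0 < m" "m < n" by auto
    then have "slot i m \<noteq> i" using slot_eq_iff[OF assms] ndvd_small by blast
    then show "x \<in> {j. j < n \<and> j \<noteq> i}" using m slot_lt by auto
  qed
  have inj: "inj_on (slot i) {0<..<n}"
  proof (rule inj_onI)
    fix a b assume ab: "a \<in> {0<..<n}" "b \<in> {0<..<n}" "slot i a = slot i b"
    show "a = b"
    proof (rule ccontr)
      assume "a \<noteq> b"
      then consider "a < b" | "b < a" by linarith
      then show False
      proof cases
        case 1
        have "slot (slot i a) (b - a) = slot i (a + (b - a))" by (rule slot_shift)
        also have "\<dots> = slot i a" using 1 ab(3) by simp
        finally have "slot (slot i a) (b - a) = slot i a" .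
        then have "n dvd b - a" using slot_eq_iff[OF slot_lt] by blast
        then show False using 1 ab by (auto dest: dvd_imp_le)
      next
        case 2
        have "slot (slot i b) (a - b) = slot i (b + (a - b))" by (rule slot_shift)
        also have "\<dots> = slot i b" using 2 ab(3) by simp
        finally have "slot (slot i b) (a - b) = slot i b" .
        then have "n dvd a - b" using slot_eq_iff[OF slot_lt] by blast
        then show False using 2 ab by (auto dest: dvd_imp_le)
      qed
    qed
  qed
  have e: "{slot i m | m. 0 < m \<and> m < n} = slot i ` {0<..<n}" by auto
  have c1: "card {slot i m | m. 0 < m \<and> m < n} = n - 1" unfolding e using card_image[OF inj] by simp
  have "{j. j < n \<and> j \<noteq> i} = {..<n} - {i}" by auto
  then have c2: "card {j. j < n \<and> j \<noteq> i} = n - 1" using assms by simp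
  show ?thesis using card_subset_eq[OF _ sub] c1 c2 by simp
qed

lemma leader_decides: "i < n \<Longrightarrow> decides n q c idf (mvA N) (outL N) (4 * B + 4) i (idf i = Ld)"
proof -
  assume i: "i < n"
  have t: "\<And>k. k < 2 * B + 2 \<Longrightarrow> tstOf (RH (2 * (2 * B + 2)) i) k = G k" using i by (intro tst_G) auto
  have L: "leaderF B (tstOf (RH (2 * (2 * B + 2)) i)) = Ld" unfolding Ld_def leaderF_def
    using t by (subst loF_cong[of B _ "tstOf (RH (2 * (2 * B + 2)) i)" G]) auto
  show ?thesis unfolding decides_def hist_def
    by (rule exI[of _ "2 * (2 * B + 2)"]) (use L in \<open>auto simp: outL_def RH_len\<close>)
qed

lemma move_decides: "i < n \<Longrightarrow> decides n q c idf (mvA N) (outM N) (Tw N) i (y i)"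
  unfolding decides_def hist_def
  by (rule exI[of _ "Tw N"]) (auto simp: outM_def RH_len walk_dir)

definition locset where "locset i = {owndist (c i) (q i) (q j) | j. j < n \<and> j \<noteq> i}"

lemma loc_decides: "i < n \<Longrightarrow> decides n q c idf (mvA N) (outD N) (Tw N + n) i (locset i)"
proof -
  assume i: "i < n"
  have whole: "\<And>k. frac (sum_list (drop (Tw N) (RH (Tw N + k) i))) = owndist (c i) (q i) (q (slot i k))"
  proof -
    fix k
    have "drop (Tw N) (RH (Tw N + k) i) = take k (drop (Tw N) (RH (Tw N + k) i))" by (simp add: RH_len)
    then show "frac (sum_list (drop (Tw N) (RH (Tw N + k) i))) = owndist (c i) (q i) (q (slot i k))"
      using frac_walk[OF i, of k k] by simp
  qed
  have nz: "\<And>k. 0 < k \<Longrightarrow> k < n \<Longrightarrow> frac (sum_list (drop (Tw N) (RH (Tw N + k) i))) \<noteq> 0"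
  proof -
    fix k assume k: "0 < k" "k < n"
    then have "slot i k \<noteq> i" using slot_eq_iff[OF i] ndvd_small by blast
    then show "frac (sum_list (drop (Tw N) (RH (Tw N + k) i))) \<noteq> 0"
      unfolding whole using own_zero[OF i slot_lt] by metis
  qed
  have "slot i n = i" using slot_eq_iff[OF i] by simp
  then have z: "frac (sum_list (drop (Tw N) (RH (Tw N + n) i))) = 0"
    unfolding whole using own_zero[OF i slot_lt] by metis
  have S: "{frac (sum_list (take m (drop (Tw N) (RH (Tw N + n) i)))) | m. 0 < m \<and> m < length (RH (Tw N + n) i) - Tw N}
      = locset i"
  proof -
    have fw: "\<And>m. m \<in> {0<..<n} \<Longrightarrow> frac (sum_list (take m (drop (Tw N) (RH (Tw N + n) i)))) = owndist (c i) (q i) (q (slot i m))"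
      using frac_walk[OF i] by simp
    have "{frac (sum_list (take m (drop (Tw N) (RH (Tw N + n) i)))) | m. 0 < m \<and> m < length (RH (Tw N + n) i) - Tw N}
       = (\<lambda>m. frac (sum_list (take m (drop (Tw N) (RH (Tw N + n) i))))) ` {0<..<n}" by (auto simp: RH_len)
    also have "\<dots> = (\<lambda>m. owndist (c i) (q i) (q (slot i m))) ` {0<..<n}" using fw by (rule image_cong[OF refl])
    also have "\<dots> = (\<lambda>j. owndist (c i) (q i) (q j)) ` (slot i ` {0<..<n})" by (simp add: image_image)
    also have "\<dots> = (\<lambda>j. owndist (c i) (q i) (q j)) ` {slot i m | m. 0 < m \<and> m < n}"
      by (rule arg_cong[where f = "\<lambda>X. (\<lambda>j. owndist (c i) (q i) (q j)) ` X"]) auto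
    also have "\<dots> = locset i" unfolding slot_image[OF i] locset_def by auto
    finally show ?thesis .
  qed
  have none: "\<And>t'. t' < Tw N + n \<Longrightarrow> outD N (idf i) (RH t' i) = None"
  proof -
    fix t' assume t': "t' < Tw N + n"
    show "outD N (idf i) (RH t' i) = None"
    proof (cases "Tw N < t'")
      case True
      then obtain k where k: "t' = Tw N + k" "0 < k" "k < n" using t' by (metis add_less_cancel_left less_imp_add_positive)
      then show ?thesis using nz[OF k(2,3)] by (simp add: outD_def)
    next
      case False then show ?thesis by (simp add: outD_def RH_len)
    qed
  qed
  show ?thesis unfolding decides_def hist_def
    by (rule exI[of _ "Tw N + n"]) (use none z S npos in \<open>auto simp: outD_def RH_len\<close>)
qed

end


lemma Tw_bound: assumes "5 \<le> N" shows "Tw N \<le> nat \<lceil>10 * log 2 (real N)\<rceil>"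
proof -
  have B1: "0 < nb N"
  proof (rule ccontr)
    assume "\<not> 0 < nb N" then have "nb N = 0" by simp
    then show False using nb_gt[of N] assms by simp
  qed
  have "real (nb N - 1) \<le> log 2 (real N)" using le_log2_of_power[OF nb_le[OF B1]] by simp
  then have l1: "real (nb N) \<le> log 2 (real N) + 1" using B1 by (simp add: of_nat_diff)
  have "(2::nat) ^ 2 \<le> N" using assms by simp
  then have l2: "2 \<le> log 2 (real N)" using le_log2_of_power[of 2 N] by simp
  have "real (Tw N) = 4 * real (nb N) + 8" by (simp add: Tw_def)
  also have "\<dots> \<le> 10 * log 2 (real N)" using l1 l2 by linarith
  finally have "real (Tw N) \<le> 10 * log 2 (real N)" .
  then have "real (Tw N) \<le> real_of_int \<lceil>10 * log 2 (real N)\<rceil>" by (meson le_of_int_ceiling order_trans)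
  then show ?thesis by linarith
qed

theorem corollary3:
  shows "(\<exists>C::real. \<exists>mv (out :: nat \<Rightarrow> nat \<Rightarrow> real list \<Rightarrow> bool option).
            solves_odd mv out leader_spec (\<lambda>N n. nat \<lceil>C * log 2 (real N)\<rceil>))
       \<and> (\<exists>C::real. \<exists>mv (out :: nat \<Rightarrow> nat \<Rightarrow> real list \<Rightarrow> bool option).
            solves_odd mv out nontrivial_move_spec (\<lambda>N n. nat \<lceil>C * log 2 (real N)\<rceil>))
       \<and> (\<exists>C::real. \<exists>mv (out :: nat \<Rightarrow> nat \<Rightarrow> real list \<Rightarrow> real set option).
            solves_odd mv out location_spec (\<lambda>N n. n + nat \<lceil>C * log 2 (real N)\<rceil>))"
proof (intro conjI)
  show "\<exists>C::real. \<exists>mv (out :: nat \<Rightarrow> nat \<Rightarrow> real list \<Rightarrow> bool option).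
            solves_odd mv out leader_spec (\<lambda>N n. nat \<lceil>C * log 2 (real N)\<rceil>)"
  proof (intro exI)
    show "solves_odd mvA outL leader_spec (\<lambda>N n. nat \<lceil>10 * log 2 (real N)\<rceil>)"
      unfolding solves_odd_def
    proof (intro allI impI)
      fix N n q c idf assume a: "valid_config N n q idf \<and> odd n"
      interpret cfg N n q c idf using a by unfold_locales auto
      have N5: "5 \<le> N" using n_gt4 nN by simp
      have T: "4 * B + 4 \<le> nat \<lceil>10 * log 2 (real N)\<rceil>" using Tw_bound[OF N5] by (simp add: Tw_def)
      have "{i. i < n \<and> idf i = Ld} = {li}" using li li_iff by auto
      then have sp: "leader_spec n q c (\<lambda>i. idf i = Ld)" by (simp add: leader_spec_def)
      show "\<exists>dec. (\<forall>i<n. decides n q c idf (mvA N) (outL N) (nat \<lceil>10 * log 2 (real N)\<rceil>) i (dec i)) \<and> leader_spec n q c dec"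
      proof (intro exI[of _ "(\<lambda>i. idf i = Ld)"] conjI allI impI)
        fix i assume "i < n"
        show "decides n q c idf (mvA N) (outL N) (nat \<lceil>10 * log 2 (real N)\<rceil>) i ((\<lambda>i. idf i = Ld) i)"
          using decides_mono[OF leader_decides[OF \<open>i < n\<close>] T] by simp
      qed (rule sp)
    qed
  qed
  show "\<exists>C::real. \<exists>mv (out :: nat \<Rightarrow> nat \<Rightarrow> real list \<Rightarrow> bool option).
            solves_odd mv out nontrivial_move_spec (\<lambda>N n. nat \<lceil>C * log 2 (real N)\<rceil>)"
  proof (intro exI)
    show "solves_odd mvA outM nontrivial_move_spec (\<lambda>N n. nat \<lceil>10 * log 2 (real N)\<rceil>)"
      unfolding solves_odd_def
    proof (intro allI impI)
      fix N n q c idf assume a: "valid_config N n q idf \<and> odd n"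
      interpret cfg N n q c idf using a by unfold_locales auto
      have N5: "5 \<le> N" using n_gt4 nN by simp
      have T: "Tw N \<le> nat \<lceil>10 * log 2 (real N)\<rceil>" using Tw_bound[OF N5] .
      have R0: "R \<noteq> 0"
      proof
        assume "R = 0" then have "coprime 0 n" using coprime_R by simp
        then show False using n_gt4 by simp
      qed
      have "2 * R \<noteq> n" using oddn by (metis dvd_triv_left)
      then have sp: "nontrivial_move_spec n q c y"
        using R0 by (simp add: nontrivial_move_spec_def nontrivial_index_def R_def)
      show "\<exists>dec. (\<forall>i<n. decides n q c idf (mvA N) (outM N) (nat \<lceil>10 * log 2 (real N)\<rceil>) i (dec i)) \<and> nontrivial_move_spec n q c dec"
      proof (intro exI[of _ "y"] conjI allI impI)
        fix i assume "i < n"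
        show "decides n q c idf (mvA N) (outM N) (nat \<lceil>10 * log 2 (real N)\<rceil>) i (y i)"
          using decides_mono[OF move_decides[OF \<open>i < n\<close>] T] by simp
      qed (rule sp)
    qed
  qed
  show "\<exists>C::real. \<exists>mv (out :: nat \<Rightarrow> nat \<Rightarrow> real list \<Rightarrow> real set option).
            solves_odd mv out location_spec (\<lambda>N n. n + nat \<lceil>C * log 2 (real N)\<rceil>)"
  proof (intro exI)
    show "solves_odd mvA outD location_spec (\<lambda>N n. n + nat \<lceil>10 * log 2 (real N)\<rceil>)"
      unfolding solves_odd_def
    proof (intro allI impI)
      fix N n q c idf assume a: "valid_config N n q idf \<and> odd n"
      interpret cfg N n q c idf using a by unfold_locales auto
      have N5: "5 \<le> N" using n_gt4 nN by simp
      have T: "Tw N + n \<le> n + nat \<lceil>10 * log 2 (real N)\<rceil>" using Tw_bound[OF N5] by simp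
      have sp: "location_spec n q c locset" by (simp add: location_spec_def locset_def)
      show "\<exists>dec. (\<forall>i<n. decides n q c idf (mvA N) (outD N) (n + nat \<lceil>10 * log 2 (real N)\<rceil>) i (dec i)) \<and> location_spec n q c dec"
      proof (intro exI[of _ "locset"] conjI allI impI)
        fix i assume "i < n"
        show "decides n q c idf (mvA N) (outD N) (n + nat \<lceil>10 * log 2 (real N)\<rceil>) i (locset i)"
          using decides_mono[OF loc_decides[OF \<open>i < n\<close>] T] by simp
      qed (rule sp)
    qed
  qed
qed


end
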